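(* Let $M_1=(E,r_1)$ and $M_2=(E,r_2)$ be demi-matroids on the same finite ground set $E$ such that $r_2(X)\le r_1(X)$ for all $X\subseteq E$. Define $\rho(X)=r_1(X)-r_2(X)$ for $X\subseteq E$. Then $(E,\rho)$ is a demi-matroid if and only if $\mathcal{E}_{M_1}\subseteq \mathcal{E}_{M_2}$.
   Context: A demi-matroid is a pair $(E,r)$ with $E$ a finite set and $r:2^E\to\mathbb{N}$ satisfying (R1) $r(\emptyset)=0$ and (R2) for every $X\subseteq E$ and $x\in E$, $r(X)\le r(X\cup\{x\})\le r(X)+1$. For a demi-matroid $M=(E,r)$, $\mathcal{E}_M=\{(X,x): X\subseteq E,\ x\in X,\ r(X\setminus\{x\})=r(X)\}$. *)

theory Defs
  imports Main
begin

definition demi_matroid :: "'a set \<Rightarrow> ('a set \<Rightarrow> nat) \<Rightarrow> bool" where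
  "demi_matroid E r \<longleftrightarrow> finite E \<and> r {} = 0 \<and>
     (\<forall>X x. X \<subseteq> E \<and> x \<in> E \<longrightarrow> r X \<le> r (insert x X) \<and> r (insert x X) \<le> r X + 1)"

definition calE :: "'a set \<Rightarrow> ('a set \<Rightarrow> nat) \<Rightarrow> ('a set \<times> 'a) set" where
  "calE E r = {(X, x). X \<subseteq> E \<and> x \<in> X \<and> r (X - {x}) = r X}"

end

theory Submission
  imports Defs
begin

theorem mainTheorem1:
  fixes E :: "'a set" and r1 r2 :: "'a set \<Rightarrow> nat"
  assumes "finite E"
    and "demi_matroid E r1" and "demi_matroid E r2"
    and "\<forall>X. X \<subseteq> E \<longrightarrow> r2 X \<le> r1 X"
  shows "demi_matroid E (\<lambda>X. r1 X - r2 X) \<longleftrightarrow> calE E r1 \<subseteq> calE E r2"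
proof
  assume d: "demi_matroid E (\<lambda>X. r1 X - r2 X)"
  show "calE E r1 \<subseteq> calE E r2"
  proof
    fix p assume "p \<in> calE E r1"
    then obtain Y x where p: "p = (Y, x)" "Y \<subseteq> E" "x \<in> Y" "r1 (Y - {x}) = r1 Y"
      by (auto simp: calE_def)
    let ?X = "Y - {x}"
    have XE: "?X \<subseteq> E" and xE: "x \<in> E" and ins: "insert x ?X = Y" using p by auto
    have m: "r1 ?X - r2 ?X \<le> r1 Y - r2 Y"
      using d XE xE ins unfolding demi_matroid_def by metis
    have m2: "r2 ?X \<le> r2 Y" using assms(3) XE xE ins unfolding demi_matroid_def by metis
    have "r2 ?X \<le> r1 ?X" "r2 Y \<le> r1 Y" using assms(4) XE p(2) by auto
    hence "r2 ?X = r2 Y" using m m2 p(4) by linarith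
    thus "p \<in> calE E r2" using p by (auto simp: calE_def)
  qed
next
  assume c: "calE E r1 \<subseteq> calE E r2"
  show "demi_matroid E (\<lambda>X. r1 X - r2 X)"
    unfolding demi_matroid_def
  proof (intro conjI allI impI)
    show "finite E" by fact
    show "r1 {} - r2 {} = 0" using assms(2,3) by (simp add: demi_matroid_def)
  next
    fix X x assume h: "X \<subseteq> E \<and> x \<in> E"
    have a1: "r1 X \<le> r1 (insert x X)" "r1 (insert x X) \<le> r1 X + 1"
      and a2: "r2 X \<le> r2 (insert x X)" "r2 (insert x X) \<le> r2 X + 1"
      using assms(2,3) h unfolding demi_matroid_def by blast+
    have b: "r2 X \<le> r1 X" "r2 (insert x X) \<le> r1 (insert x X)" using assms(4) h by auto
    have key: "r1 X = r1 (insert x X) \<Longrightarrow> r2 X = r2 (insert x X)"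
    proof (cases "x \<in> X")
      case True thus ?thesis by (simp add: insert_absorb)
    next
      case False
      assume e: "r1 X = r1 (insert x X)"
      have "insert x X - {x} = X" using False by auto
      hence "(insert x X, x) \<in> calE E r1" using h e by (auto simp: calE_def)
      hence "(insert x X, x) \<in> calE E r2" using c by auto
      thus ?thesis using \<open>insert x X - {x} = X\<close> by (auto simp: calE_def)
    qed
    show "r1 X - r2 X \<le> r1 (insert x X) - r2 (insert x X)"
      using a1 a2 b key by (cases "r1 X = r1 (insert x X)") auto
    show "r1 (insert x X) - r2 (insert x X) \<le> r1 X - r2 X + 1"
      using a1 a2 b key by (cases "r1 X = r1 (insert x X)") auto
  qed
qed

end
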